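(* Let $d\in\mathbb{N}$ and $\mathcal{M}\subseteq\mathbb{N}_0^d$ with $\boldsymbol 0\notin\mathcal{M}$. Then $\min(\mathcal{M})=\min(P(\mathcal{M}))$. Consequently $\min(\mathcal{M})=\min(\mathcal{M}^i)$ for all $i\ge 0$, and $\min(\mathcal{M})=\min(\mathcal{M}^\infty)$ whenever the limit $\mathcal{M}^\infty$ exists.
   Context: For $d\in\mathbb{N}$ a game is a set $\mathcal{M}\subseteq\mathbb{N}_0^d$ of moves. From position $\boldsymbol x\in\mathbb{N}_0^d$ a player may move to $\boldsymbol y\in\mathbb{N}_0^d$ iff $\boldsymbol x-\boldsymbol y\in\mathcal{M}$. Misère play: a player who cannot move wins. If $\boldsymbol 0\in\mathcal{M}$, $P(\mathcal{M})=\varnothing$. Otherwise: a position is an N-position if it has no option or some option is a P-position; otherwise it is a P-position; $P(\mathcal{M})$ denotes the set of P-positions. The $\star$-operator is $\mathcal{M}^\star=P(\mathcal{M})$; $\mathcal{M}^0=\mathcal{M}$, $\mathcal{M}^i=(\mathcal{M}^{i-1})^\star$. The limit $\mathcal{M}^\infty$ exists if every $\boldsymbol x$ is eventually always in or eventually always outside $\mathcal{M}^i$, and then is the set of those eventually always in. $\mathbb{N}_0^d$ carries the componentwise partial order $\preceq$; $\min(S)$ denotes the set of minimal elements of $S$, with $\min(\varnothing)=\varnothing$. *)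

theory Defs
  imports Main
begin

text \<open>Positions in N_0^d are functions 'd \<Rightarrow> nat for a finite index type 'd (d = CARD('d)).
  The componentwise order is the pointwise order on functions.\<close>

definition is_option :: "('d \<Rightarrow> nat) set \<Rightarrow> ('d \<Rightarrow> nat) \<Rightarrow> ('d \<Rightarrow> nat) \<Rightarrow> bool" where
  "is_option M x y \<longleftrightarrow> y \<le> x \<and> (\<lambda>i. x i - y i) \<in> M"

function isP :: "('d::finite \<Rightarrow> nat) set \<Rightarrow> ('d \<Rightarrow> nat) \<Rightarrow> bool" where
  "isP M x = ((\<lambda>_. 0) \<notin> M \<and> (\<exists>y. is_option M x y) \<and>
      (\<forall>y\<in>{y. (\<lambda>_. 0) \<notin> M \<and> is_option M x y}. \<not> isP M y))"
  by auto
termination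
proof (relation "measure (\<lambda>(M, x::'d::finite \<Rightarrow> nat). sum x UNIV)")
  show "wf (measure (\<lambda>(M, x::'d::finite \<Rightarrow> nat). sum x UNIV))" by simp
next
  fix M and x y :: "'d::finite \<Rightarrow> nat"
  assume "y \<in> {y. (\<lambda>_. 0) \<notin> M \<and> is_option M x y}"
  hence nz: "(\<lambda>_. 0) \<notin> M" and le: "y \<le> x" and inM: "(\<lambda>i. x i - y i) \<in> M"
    by (auto simp: is_option_def)
  have "y \<noteq> x" using nz inM by auto
  then obtain j where j: "y j \<noteq> x j" by auto
  have lej: "\<And>i. y i \<le> x i" using le by (simp add: le_fun_def)
  have "y j < x j" using lej[of j] j by simp
  hence "sum y UNIV < sum x UNIV"
    using lej \<open>y j < x j\<close> by (intro sum_strict_mono_ex1) auto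
  thus "((M, y), (M, x)) \<in> measure (\<lambda>(M, x::'d::finite \<Rightarrow> nat). sum x UNIV)" by simp
qed

definition Ppos :: "('d::finite \<Rightarrow> nat) set \<Rightarrow> ('d \<Rightarrow> nat) set" where
  "Ppos M = {x. isP M x}"

definition Miter :: "('d::finite \<Rightarrow> nat) set \<Rightarrow> nat \<Rightarrow> ('d \<Rightarrow> nat) set" where
  "Miter M i = (Ppos ^^ i) M"

definition limit_exists :: "('d::finite \<Rightarrow> nat) set \<Rightarrow> bool" where
  "limit_exists M \<longleftrightarrow> (\<forall>x. (\<exists>N. \<forall>i\<ge>N. x \<in> Miter M i) \<or> (\<exists>N. \<forall>i\<ge>N. x \<notin> Miter M i))"

definition Mlim :: "('d::finite \<Rightarrow> nat) set \<Rightarrow> ('d \<Rightarrow> nat) set" where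
  "Mlim M = {x. \<exists>N. \<forall>i\<ge>N. x \<in> Miter M i}"

definition minset :: "('d \<Rightarrow> nat) set \<Rightarrow> ('d \<Rightarrow> nat) set" where
  "minset S = {x \<in> S. \<forall>y\<in>S. y \<le> x \<longrightarrow> y = x}"

end

theory Submission
  imports Defs
begin

declare isP.simps[simp del]

lemma exists_min_below:
  fixes S :: "('d::finite \<Rightarrow> nat) set"
  shows "x \<in> S \<Longrightarrow> \<exists>m\<in>minset S. m \<le> x"
proof (induction "sum x UNIV" arbitrary: x rule: less_induct)
  case less
  show ?case
  proof (cases "x \<in> minset S")
    case True thus ?thesis by auto
  next
    case False
    then obtain y where y: "y \<in> S" "y \<le> x" "y \<noteq> x" using less.prems by (auto simp: minset_def)
    then obtain j where j: "y j \<noteq> x j" by auto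
    have lej: "\<And>i. y i \<le> x i" using y by (simp add: le_fun_def)
    have "y j < x j" using lej[of j] j by simp
    hence "sum y UNIV < sum x UNIV"
      using lej by (intro sum_strict_mono_ex1) auto
    from less.hyps[OF this y(1)] obtain m where "m \<in> minset S" "m \<le> y" by blast
    thus ?thesis using y(2) by (meson order_trans)
  qed
qed

lemma not_isP0:
  assumes "(\<lambda>_. 0) \<notin> M"
  shows "\<not> isP M (\<lambda>_. 0)"
proof
  assume "isP M (\<lambda>_. 0)"
  hence "\<exists>y. is_option M (\<lambda>_. 0) y" by (subst (asm) isP.simps) blast
  then obtain y where "y \<le> (\<lambda>_. 0)" "(\<lambda>i. 0 - y i) \<in> M" by (auto simp: is_option_def)
  thus False using assms by simp
qed

lemma isP_below:
  assumes "isP M x"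
  shows "\<exists>m\<in>M. m \<le> x"
proof -
  have "\<exists>y. is_option M x y" using assms by (subst (asm) isP.simps) blast
  then obtain y where "y \<le> x" "(\<lambda>i. x i - y i) \<in> M" by (auto simp: is_option_def)
  thus ?thesis by (intro bexI[of _ "(\<lambda>i. x i - y i)"]) (auto simp: le_fun_def)
qed

lemma min_isP:
  assumes nz: "(\<lambda>_. 0) \<notin> M" and x: "x \<in> minset M"
  shows "isP M x"
proof -
  have xM: "x \<in> M" using x by (simp add: minset_def)
  have opt: "is_option M x (\<lambda>_. 0)" using xM by (simp add: is_option_def le_fun_def)
  have "\<not> isP M y" if "is_option M x y" for y
  proof -
    have yx: "y \<le> x" and d: "(\<lambda>i. x i - y i) \<in> M" using that by (auto simp: is_option_def)
    have "(\<lambda>i. x i - y i) \<le> x" by (simp add: le_fun_def)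
    hence "(\<lambda>i. x i - y i) = x" using x d unfolding minset_def by blast
    hence e: "\<And>i. x i - y i = x i" by (metis fun_cong)
    have "\<And>i. y i = 0"
    proof -
      fix i have "y i \<le> x i" using yx by (simp add: le_fun_def)
      thus "y i = 0" using e[of i] by arith
    qed
    hence "y = (\<lambda>_. 0)" by auto
    thus ?thesis using not_isP0[OF nz] by simp
  qed
  thus ?thesis using nz opt by (subst isP.simps) blast
qed

lemma minP:
  assumes nz: "(\<lambda>_. 0) \<notin> M"
  shows "minset M = minset (Ppos M)"
proof
  show "minset M \<subseteq> minset (Ppos M)"
  proof
    fix x assume x: "x \<in> minset M"
    have "x \<in> Ppos M" using min_isP[OF nz x] by (simp add: Ppos_def)
    moreover have "y = x" if "y \<in> Ppos M" "y \<le> x" for y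
    proof -
      have "isP M y" using that(1) by (simp add: Ppos_def)
      then obtain m where "m \<in> M" "m \<le> y" using isP_below by blast
      hence "m = x" using x that(2) by (auto simp: minset_def intro: order_trans)
      thus ?thesis using \<open>m \<le> y\<close> that(2) by simp
    qed
    ultimately show "x \<in> minset (Ppos M)" by (auto simp: minset_def)
  qed
next
  have key: "\<exists>m\<in>minset M. m = x" if x: "x \<in> minset (Ppos M)" "y \<in> M" "y \<le> x" for x y
  proof -
    obtain m where m: "m \<in> minset M" "m \<le> y" using exists_min_below[OF x(2)] by blast
    have "m \<in> Ppos M" using min_isP[OF nz m(1)] by (simp add: Ppos_def)
    moreover have "m \<le> x" using m(2) x(3) by simp
    ultimately have "m = x" using x(1) by (auto simp: minset_def)
    thus ?thesis using m by blast
  qed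
  show "minset (Ppos M) \<subseteq> minset M"
  proof
    fix x assume x: "x \<in> minset (Ppos M)"
    have "isP M x" using x by (simp add: minset_def Ppos_def)
    then obtain y where y: "y \<in> M" "y \<le> x" using isP_below by blast
    have xm: "x \<in> minset M" using key[OF x y] by blast
    show "x \<in> minset M" using xm .
  qed
qed

lemma Miter_nz:
  assumes nz: "(\<lambda>_. 0) \<notin> M"
  shows "(\<lambda>_. 0) \<notin> Miter M i"
proof (cases i)
  case 0 thus ?thesis using nz by (simp add: Miter_def)
next
  case (Suc j)
  have "(\<lambda>_. 0) \<notin> Ppos N" for N :: "('d::finite \<Rightarrow> nat) set"
  proof
    assume "(\<lambda>_. 0) \<in> Ppos N"
    hence "isP N (\<lambda>_. 0)" by (simp add: Ppos_def)
    then obtain m where "m \<in> N" "m \<le> (\<lambda>_. 0)" using isP_below by blast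
    hence "(\<lambda>_. 0) \<in> N" by (metis le0 le_funI order_antisym)
    hence "\<not> isP N (\<lambda>_. 0)" by (subst isP.simps) blast
    thus False using \<open>isP N (\<lambda>_. 0)\<close> by simp
  qed
  thus ?thesis using Suc by (simp add: Miter_def)
qed

lemma min_iter:
  assumes nz: "(\<lambda>_. 0) \<notin> M"
  shows "minset M = minset (Miter M i)"
proof (induction i)
  case 0 thus ?case by (simp add: Miter_def)
next
  case (Suc i)
  have "Miter M (Suc i) = Ppos (Miter M i)" by (simp add: Miter_def)
  thus ?case using Suc minP[OF Miter_nz[OF nz, of i]] by simp
qed

theorem lemma2:
  fixes M :: "('d::finite \<Rightarrow> nat) set"
  assumes "(\<lambda>_. 0) \<notin> M"
  shows "minset M = minset (Ppos M)
    \<and> (\<forall>i. minset M = minset (Miter M i))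
    \<and> (limit_exists M \<longrightarrow> minset M = minset (Mlim M))"
proof -
  have it: "\<And>i. minset M = minset (Miter M i)" using min_iter[OF assms] .
  have "minset M = minset (Mlim M)"
  proof
    show "minset M \<subseteq> minset (Mlim M)"
    proof
      fix x assume x: "x \<in> minset M"
      have xi: "\<And>i. x \<in> minset (Miter M i)" using it x by blast
      hence "x \<in> Mlim M" by (auto simp: Mlim_def minset_def)
      moreover have "y = x" if yy: "y \<in> Mlim M" "y \<le> x" for y
      proof -
        obtain N where "\<forall>i\<ge>N. y \<in> Miter M i" using yy(1) by (auto simp: Mlim_def)
        hence "y \<in> Miter M N" by simp
        thus ?thesis using xi[of N] yy(2) by (auto simp: minset_def)
      qed
      ultimately show "x \<in> minset (Mlim M)" by (auto simp: minset_def)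
    qed
  next
    show "minset (Mlim M) \<subseteq> minset M"
    proof
      fix x assume x: "x \<in> minset (Mlim M)"
      obtain N where "\<forall>i\<ge>N. x \<in> Miter M i" using x by (auto simp: minset_def Mlim_def)
      hence "x \<in> Miter M N" by simp
      then obtain m where m: "m \<in> minset (Miter M N)" "m \<le> x" using exists_min_below by blast
      hence mM: "m \<in> minset M" using it by blast
      hence "\<And>i. m \<in> Miter M i" using it by (auto simp: minset_def)
      hence "m \<in> Mlim M" by (auto simp: Mlim_def)
      hence "m = x" using x m(2) by (auto simp: minset_def)
      thus "x \<in> minset M" using mM by simp
    qed
  qed
  thus ?thesis using minP[OF assms] it by blast
qed

end
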